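(* Let $n\geqslant 1$ and $0\leqslant d\leqslant n-1$ be integers. Then, modulo $\Phi_n(q)$, \[ \sum_{k=0}^{n-1}q^k\begin{bmatrix}2k\\ k+d\end{bmatrix}(-q^{k+1};q)_{n-1-k} \equiv\begin{cases} 0&\text{if }n\equiv d\pmod{2},\\ q^{3(n-1)^2/4-3d^2/4-1} &\text{if }n\equiv d+1\pmod{4},\\ -q^{3(n-1)^2/4-3d^2/4-1} &\text{if }n\equiv d-1\pmod{4}, \end{cases} \] and \[ \sum_{k=0}^{n-1}q^k\begin{bmatrix}2k\\ k+d\end{bmatrix}(-q^{k+1};q)_{n-1-k}^2 \equiv \sum_{k=d+1}^{n}q^{\binom{n}{2}+\binom{k}{2}-d^2}\pmod{\Phi_n(q)}. \]
   Context: Here $q$ is an indeterminate. For $n\geq 1$, $(x;q)_n=(1-x)(1-xq)\cdots(1-xq^{n-1})$ and $(x;q)_0=1$. The $q$-binomial coefficient is $\begin{bmatrix}n\\ k\end{bmatrix}=\frac{(q;q)_n}{(q;q)_k(q;q)_{n-k}}$ if $0\leqslant k\leqslant n$ and $0$ otherwise. $\Phi_n(q)=\prod_{1\le k\le n,\ \gcd(n,k)=1}(q-e^{2\pi i k/n})$ is the $n$-th cyclotomic polynomial. Congruences modulo $\Phi_n(q)$ are between rational functions in $q$ (possibly with negative powers of $q$) whose denominators are coprime to $\Phi_n(q)$: $A\equiv B$ means $A-B$ is such a rational function times $\Phi_n(q)$. *)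

theory Defs
  imports "HOL-Analysis.Analysis" "HOL-Computational_Algebra.Polynomial" "HOL-Computational_Algebra.Fraction_Field"
begin

type_synonym ratfun = "complex poly fract"

definition qvar :: ratfun where
  "qvar = Fract [:0, 1:] 1"

definition qpoch :: "ratfun \<Rightarrow> nat \<Rightarrow> ratfun" where
  "qpoch x m = (\<Prod>j<m. 1 - x * qvar ^ j)"

definition qbinom :: "nat \<Rightarrow> nat \<Rightarrow> ratfun" where
  "qbinom n k = (if k \<le> n then qpoch qvar n / (qpoch qvar k * qpoch qvar (n - k)) else 0)"

definition cyclotomic :: "nat \<Rightarrow> complex poly" where
  "cyclotomic n = (\<Prod>k\<in>{k\<in>{1..n}. coprime k n}. [:- cis (2 * pi * real k / real n), 1:])"

definition cyc_cong :: "nat \<Rightarrow> ratfun \<Rightarrow> ratfun \<Rightarrow> bool" where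
  "cyc_cong n A B \<longleftrightarrow>
     (\<exists>p s. s \<noteq> 0 \<and> coprime s (cyclotomic n) \<and> A - B = Fract p s * Fract (cyclotomic n) 1)"

end

theory Submission
  imports Defs "HOL-Computational_Algebra.Polynomial_Factorial" "HOL-Computational_Algebra.Fundamental_Theorem_Algebra"
begin

lemma qvar_to_fract: "qvar = to_fract [:0,1:]" by (simp add: qvar_def to_fract_def)

lemma qvar_pow: "qvar ^ j = to_fract ([:0,1:] ^ j)"
proof (induct j)
  case (Suc j)
  then show ?case by (simp only: power_Suc Suc.hyps qvar_to_fract to_fract_mult)
qed simp

lemma qvar_nz: "qvar \<noteq> 0" by (simp add: qvar_to_fract)

lemma qvar_pow_ne1: "0 < j \<Longrightarrow> qvar ^ j \<noteq> 1"
proof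
  assume "0 < j" "qvar ^ j = 1"
  hence "([:0,1:] :: complex poly) ^ j = 1"
    by (metis qvar_pow to_fract_1 to_fract_eq_iff)
  hence "degree (([:0,1:] :: complex poly) ^ j) = 0" by simp
  thus False using \<open>0 < j\<close> by (simp add: degree_power_eq)
qed

lemma one_minus_qpow_nz: "0 < j \<Longrightarrow> 1 - qvar ^ j \<noteq> 0"
  using qvar_pow_ne1 by auto

lemma qpoch_0[simp]: "qpoch x 0 = 1" by (simp add: qpoch_def)

lemma qpoch_Suc: "qpoch x (Suc m) = qpoch x m * (1 - x * qvar ^ m)"
  by (simp add: qpoch_def)

lemma qpoch_q_Suc: "qpoch qvar (Suc m) = qpoch qvar m * (1 - qvar ^ Suc m)"
  by (simp add: qpoch_Suc)

lemma qpoch_q_nz: "qpoch qvar m \<noteq> 0"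
proof (induct m)
  case (Suc m)
  have "1 - qvar ^ Suc m \<noteq> 0" by (rule one_minus_qpow_nz) simp
  then show ?case using Suc by (simp only: qpoch_q_Suc mult_eq_0_iff) simp
qed simp

lemma qbinom_gt: "N < k \<Longrightarrow> qbinom N k = 0" by (simp add: qbinom_def)
lemma qbinom_self[simp]: "qbinom N N = 1" by (simp add: qbinom_def qpoch_q_nz)
lemma qbinom_0[simp]: "qbinom N 0 = 1" by (simp add: qbinom_def qpoch_q_nz)

lemma qbinom_eq: "k \<le> N \<Longrightarrow> qbinom N k = qpoch qvar N / (qpoch qvar k * qpoch qvar (N - k))"
  by (simp add: qbinom_def)

lemma qbinom_QR: "(1 - qvar ^ Suc m) * qbinom N (Suc m) = (1 - qvar ^ (N - m)) * qbinom N m"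
proof (cases "m < N")
  case True
  then obtain r where r: "N - m = Suc r" "N - Suc m = r" by (metis Suc_diff_Suc)
  have c1: "1 - qvar ^ Suc r \<noteq> 0" "1 - qvar ^ Suc m \<noteq> 0" by (rule one_minus_qpow_nz; simp)+
  have "(1 - qvar ^ Suc m) * qbinom N (Suc m) = (1 - qvar ^ Suc m) * (qpoch qvar N / (qpoch qvar m * (1 - qvar ^ Suc m) * qpoch qvar r))"
    using True r by (simp only: qbinom_eq qpoch_q_Suc Suc_leI)
  also have "\<dots> = (1 - qvar ^ Suc r) * (qpoch qvar N / (qpoch qvar m * (qpoch qvar r * (1 - qvar ^ Suc r))))"
    using c1 qpoch_q_nz by (simp add: field_simps del: power_Suc)
  also have "\<dots> = (1 - qvar ^ (N - m)) * qbinom N m"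
    using True r by (simp only: qbinom_eq qpoch_q_Suc less_imp_le)
  finally show ?thesis .
next
  case False
  then show ?thesis by (simp add: qbinom_gt)
qed

lemma qbinom_QS: "(1 - qvar ^ Suc m) * qbinom (Suc N) (Suc m) = (1 - qvar ^ Suc N) * qbinom N m"
proof (cases "m \<le> N")
  case True
  have c1: "1 - qvar ^ Suc N \<noteq> 0" "1 - qvar ^ Suc m \<noteq> 0" by (rule one_minus_qpow_nz; simp)+
  have "(1 - qvar ^ Suc m) * qbinom (Suc N) (Suc m) = (1 - qvar ^ Suc m) * (qpoch qvar N * (1 - qvar ^ Suc N) / (qpoch qvar m * (1 - qvar ^ Suc m) * qpoch qvar (N - m)))"
    using True by (simp only: qbinom_eq qpoch_q_Suc Suc_le_mono diff_Suc_Suc)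
  also have "\<dots> = (1 - qvar ^ Suc N) * (qpoch qvar N / (qpoch qvar m * qpoch qvar (N - m)))"
    using c1 qpoch_q_nz by (simp add: field_simps del: power_Suc)
  also have "\<dots> = (1 - qvar ^ Suc N) * qbinom N m"
    using True by (simp only: qbinom_eq)
  finally show ?thesis .
next
  case False
  then show ?thesis by (simp add: qbinom_gt)
qed

lemma qbinom_QT: "(1 - qvar ^ (Suc N - m)) * qbinom (Suc N) m = (1 - qvar ^ Suc N) * qbinom N m"
proof (cases "m \<le> N")
  case True
  then obtain r where r: "Suc N - m = Suc r" "N - m = r" by (metis Suc_diff_le diff_Suc_Suc)
  have c1: "1 - qvar ^ Suc N \<noteq> 0" "1 - qvar ^ Suc r \<noteq> 0" by (rule one_minus_qpow_nz; simp)+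
  have e1: "qbinom (Suc N) m = qpoch qvar (Suc N) / (qpoch qvar m * qpoch qvar (Suc r))"
    using qbinom_eq[of m "Suc N"] True r by simp
  have e2: "qbinom N m = qpoch qvar N / (qpoch qvar m * qpoch qvar r)"
    using qbinom_eq[of m N] True r by simp
  show ?thesis unfolding e1 e2 r(1) qpoch_q_Suc
    using c1 qpoch_q_nz by (simp add: field_simps del: power_Suc)
next
  case False
  then show ?thesis by (cases "m = Suc N") (simp_all add: qbinom_gt)
qed

lemma pascal_field:
  fixes a b c u v :: "'a::field"
  assumes "b \<noteq> 0" "c \<noteq> 0" "1 - u \<noteq> 0" "1 - v \<noteq> 0"
  shows "a * (1 - u * v) / (b * (1 - u) * (c * (1 - v))) = a / (b * (c * (1 - v))) + u * (a / (b * (1 - u) * c))"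
proof -
  define U V where "U = 1 - u" and "V = 1 - v"
  have u: "u = 1 - U" and v: "v = 1 - V" by (simp_all add: U_def V_def)
  have "U \<noteq> 0" "V \<noteq> 0" using assms by (simp_all add: U_def V_def)
  then show ?thesis unfolding u v using assms(1,2)
    by (simp add: field_simps)
qed

lemma qbinom_pascal: "qbinom (Suc N) (Suc k) = qbinom N k + qvar ^ Suc k * qbinom N (Suc k)"
proof (cases "k < N")
  case True
  then obtain r where r: "N - k = Suc r" "N - Suc k = r" by (metis Suc_diff_Suc)
  have e: "Suc N - Suc k = Suc r" using r by simp
  have c1: "1 - qvar ^ Suc r \<noteq> 0" "1 - qvar ^ Suc k \<noteq> 0"
    by (rule one_minus_qpow_nz; simp)+
  have pw: "qvar ^ Suc N = qvar ^ Suc k * qvar ^ Suc r"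
  proof -
    have "Suc N = Suc k + Suc r" using r True by simp
    then show ?thesis by (simp only: power_add)
  qed
  have "qbinom (Suc N) (Suc k) = qpoch qvar N * (1 - qvar ^ Suc k * qvar ^ Suc r) / (qpoch qvar k * (1 - qvar ^ Suc k) * (qpoch qvar r * (1 - qvar ^ Suc r)))"
    using qbinom_eq[of "Suc k" "Suc N"] True e pw by (simp only: qpoch_q_Suc Suc_le_mono less_imp_le)
  moreover have "qbinom N k = qpoch qvar N / (qpoch qvar k * (qpoch qvar r * (1 - qvar ^ Suc r)))"
    using qbinom_eq[of k N] True r by (simp only: qpoch_q_Suc less_imp_le)
  moreover have "qbinom N (Suc k) = qpoch qvar N / (qpoch qvar k * (1 - qvar ^ Suc k) * qpoch qvar r)"
    using qbinom_eq[of "Suc k" N] True r by (simp only: qpoch_q_Suc Suc_leI)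
  ultimately show ?thesis
    using pascal_field[OF qpoch_q_nz qpoch_q_nz c1(2) c1(1)] by simp
next
  case False
  then show ?thesis by (cases "k = N") (simp_all add: qbinom_gt)
qed

lemma no_common_root_coprime:
  fixes p q :: "complex poly"
  assumes "q \<noteq> 0" "\<And>z. poly p z = 0 \<Longrightarrow> poly q z \<noteq> 0"
  shows "coprime p q"
proof (rule coprimeI)
  fix d assume d: "d dvd p" "d dvd q"
  have "d \<noteq> 0"
  proof
    assume "d = 0"
    then have "q = 0" using d(2) by simp
    then show False using assms(1) by simp
  qed
  have "degree d = 0"
  proof (rule ccontr)
    assume "degree d \<noteq> 0"
    then have dpos: "degree d > 0" by simp
    obtain z where z: "poly d z = 0"
      using alg_closed_imp_poly_has_root[OF dpos] by blast
    have "poly p z = 0" using d(1) z by (auto elim!: dvdE)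
    moreover have "poly q z = 0" using d(2) z by (auto elim!: dvdE)
    ultimately show False using assms(2) by blast
  qed
  then show "is_unit d" using \<open>d \<noteq> 0\<close> by (simp add: is_unit_iff_degree)
qed

lemma coprime_mult_cyc_aux:
  fixes S1 S2 C :: "complex poly"
  assumes "C \<noteq> 0" "coprime S1 C" "coprime S2 C"
  shows "coprime (S1 * S2) C"
proof (rule no_common_root_coprime[OF assms(1)])
  fix z assume "poly (S1 * S2) z = 0"
  then have "poly S1 z = 0 \<or> poly S2 z = 0" by simp
  then show "poly C z \<noteq> 0" using coprime_poly_0[OF assms(2), of z] coprime_poly_0[OF assms(3), of z] by blast
qed

lemma prod_linear_dvd:
  fixes r :: "nat \<Rightarrow> complex"
  assumes "finite K" "inj_on r K" "\<And>k. k \<in> K \<Longrightarrow> poly p (r k) = 0"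
  shows "(\<Prod>k\<in>K. [:- r k, 1:]) dvd p"
  using assms
proof (induct K rule: finite_induct)
  case empty
  then show ?case by simp
next
  case (insert a K)
  have inj: "inj_on r K" using insert.prems(1) by (auto simp: inj_on_def)
  have h1: "(\<Prod>k\<in>K. [:- r k, 1:]) dvd p" using insert inj by auto
  have h2: "[:- r a, 1:] dvd p" using insert.prems(2) by (simp add: poly_eq_0_iff_dvd)
  have "poly (\<Prod>k\<in>K. [:- r k, 1:]) (r a) \<noteq> 0"
  proof -
    have "r a \<noteq> r k" if "k \<in> K" for k
      using insert.prems(1) insert.hyps(2) that by (auto simp: inj_on_def)
    then show ?thesis using insert.hyps(1) by (simp add: poly_prod prod_zero_iff)
  qed
  moreover obtain s where s: "p = (\<Prod>k\<in>K. [:- r k, 1:]) * s" using h1 by (elim dvdE)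
  moreover have "poly p (r a) = 0" using insert.prems(2) by simp
  ultimately have "poly s (r a) = 0" by simp
  then have "[:- r a, 1:] dvd s" by (simp add: poly_eq_0_iff_dvd)
  then have "[:- r a, 1:] * (\<Prod>k\<in>K. [:- r k, 1:]) dvd p"
    using s by (metis mult.commute mult_dvd_mono dvd_refl)
  moreover have "(\<Prod>k\<in>insert a K. [:- r k, 1:]) = [:- r a, 1:] * (\<Prod>k\<in>K. [:- r k, 1:])"
    by (rule prod.insert[OF insert.hyps(1,2)])
  ultimately show ?case by (simp only:)
qed

definition rootu :: "nat \<Rightarrow> nat \<Rightarrow> complex" where
  "rootu n k = cis (2 * pi * real k / real n)"

lemma rootu_pow: "rootu n k ^ m = exp (2 * of_real pi * \<i> * of_nat (k * m) / of_nat n)"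
proof -
  have "rootu n k ^ m = cis (real m * (2 * pi * real k / real n))"
    unfolding rootu_def by (rule Complex.DeMoivre)
  also have "\<dots> = exp (\<i> * complex_of_real (real m * (2 * pi * real k / real n)))"
    by (rule cis_conv_exp)
  also have "\<i> * complex_of_real (real m * (2 * pi * real k / real n)) = 2 * of_real pi * \<i> * of_nat (k * m) / of_nat n"
    by (simp add: field_simps)
  finally show ?thesis by (simp only:)
qed

lemma rootu_pow_eq_1:
  assumes "1 \<le> n" "coprime k n"
  shows "rootu n k ^ m = 1 \<longleftrightarrow> n dvd m"
proof -
  have "rootu n k ^ m = 1 \<longleftrightarrow> exp (2 * of_real pi * \<i> * of_nat (k * m) / of_nat n) = exp (2 * of_real pi * \<i> * of_nat 0 / of_nat n)"
    by (simp only: rootu_pow of_nat_0 mult_zero_right mult_zero_left div_0 exp_zero)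
  also have "\<dots> \<longleftrightarrow> (k * m) mod n = 0 mod n"
    by (rule complex_root_unity_eq[OF assms(1)])
  also have "\<dots> \<longleftrightarrow> n dvd k * m" by (auto simp: dvd_eq_mod_eq_0)
  also have "\<dots> \<longleftrightarrow> n dvd m"
    using assms(2) by (simp add: coprime_commute coprime_dvd_mult_right_iff)
  finally show ?thesis .
qed

lemma rootu_inj:
  assumes "1 \<le> n"
  shows "inj_on (rootu n) {1..n}"
proof (rule inj_onI)
  fix j k assume jk: "j \<in> {1..n}" "k \<in> {1..n}" "rootu n j = rootu n k"
  have e: "rootu n j = exp (2 * of_real pi * \<i> * of_nat j / of_nat n)"
    "rootu n k = exp (2 * of_real pi * \<i> * of_nat k / of_nat n)"
    using rootu_pow[of n j 1] rootu_pow[of n k 1] by (simp_all only: power_one_right mult_1_right)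
  have "exp (2 * of_real pi * \<i> * of_nat j / of_nat n) = exp (2 * of_real pi * \<i> * of_nat k / of_nat n)"
    using jk(3) unfolding e .
  then have "j mod n = k mod n" by (rule iffD1[OF complex_root_unity_eq[OF assms]])
  moreover have "j mod n = (if j = n then 0 else j)" "k mod n = (if k = n then 0 else k)"
    using jk(1,2) by auto
  ultimately show "j = k" using jk(1,2) by (auto split: if_splits)
qed

lemma cyc_def2: "cyclotomic n = (\<Prod>k\<in>{k\<in>{1..n}. coprime k n}. [:- rootu n k, 1:])"
  by (simp add: cyclotomic_def rootu_def)

lemma cyc_nz: "cyclotomic n \<noteq> 0"
  by (simp add: cyc_def2 prod_zero_iff)

lemma coprime_mult_cyc: "coprime S1 (cyclotomic n) \<Longrightarrow> coprime S2 (cyclotomic n) \<Longrightarrow> coprime (S1 * S2) (cyclotomic n)"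
  by (rule coprime_mult_cyc_aux[OF cyc_nz])

lemma cyc_root:
  assumes "poly (cyclotomic n) z = 0"
  shows "\<exists>k. 1 \<le> k \<and> k \<le> n \<and> coprime k n \<and> z = rootu n k"
  using assms by (auto simp: cyc_def2 poly_prod prod_zero_iff)

lemma cyc_dvd:
  assumes "1 \<le> n" "\<And>z. poly (cyclotomic n) z = 0 \<Longrightarrow> poly p z = 0"
  shows "cyclotomic n dvd p"
  unfolding cyc_def2
proof (rule prod_linear_dvd)
  show "inj_on (rootu n) {k \<in> {1..n}. coprime k n}"
    using rootu_inj[OF assms(1)] by (rule inj_on_subset) auto
  fix k assume k: "k \<in> {k \<in> {1..n}. coprime k n}"
  show "poly p (rootu n k) = 0"
    using k by (intro assms(2)) (auto simp: cyc_def2 poly_prod prod_zero_iff)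
qed simp

lemma cyc_dvd_xn: "1 \<le> n \<Longrightarrow> cyclotomic n dvd ([:0,1:] ^ n - 1)"
proof (rule cyc_dvd)
  fix z assume "1 \<le> n" "poly (cyclotomic n) z = 0"
  then obtain k where k: "coprime k n" "z = rootu n k" using cyc_root by blast
  then have "z ^ n = 1" using rootu_pow_eq_1[OF \<open>1 \<le> n\<close> k(1)] by simp
  then show "poly ([:0,1:] ^ n - 1) z = 0" by simp
qed

lemma coprime_xpow_cyc: "coprime ([:0,1:] ^ j) (cyclotomic n)"
proof (rule no_common_root_coprime[OF cyc_nz])
  fix z :: complex assume "poly ([:0,1:] ^ j) z = 0"
  then have "z = 0" by (simp add: power_eq_0_iff)
  show "poly (cyclotomic n) z \<noteq> 0"
  proof
    assume "poly (cyclotomic n) z = 0"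
    then obtain k where "z = rootu n k" using cyc_root by blast
    then show False using \<open>z = 0\<close> by (simp add: rootu_def)
  qed
qed

lemma coprime_1_minus_xpow_cyc:
  assumes "1 \<le> n" "\<not> n dvd m"
  shows "coprime (1 - [:0,1:] ^ m) (cyclotomic n)"
proof (rule no_common_root_coprime[OF cyc_nz])
  fix z :: complex assume "poly (1 - [:0,1:] ^ m) z = 0"
  then have "z ^ m = 1" by simp
  show "poly (cyclotomic n) z \<noteq> 0"
  proof
    assume "poly (cyclotomic n) z = 0"
    then obtain k where k: "coprime k n" "z = rootu n k" using cyc_root by blast
    then have "n dvd m" using \<open>z ^ m = 1\<close> rootu_pow_eq_1[OF assms(1) k(1)] by simp
    then show False using assms(2) by simp
  qed
qed

definition good :: "nat \<Rightarrow> ratfun \<Rightarrow> bool" where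
  "good n x \<longleftrightarrow> (\<exists>P S. S \<noteq> 0 \<and> coprime S (cyclotomic n) \<and> x = to_fract P / to_fract S)"

lemma goodI: "S \<noteq> 0 \<Longrightarrow> coprime S (cyclotomic n) \<Longrightarrow> x = to_fract P / to_fract S \<Longrightarrow> good n x"
  unfolding good_def by blast

lemma good_to_fract: "good n (to_fract P)"
  by (rule goodI[of 1]) simp_all

lemma good_0: "good n 0" using good_to_fract[of n 0] by simp
lemma good_1: "good n 1" using good_to_fract[of n 1] by simp

lemma good_add:
  assumes "good n x" "good n y" shows "good n (x + y)"
proof -
  obtain P1 S1 where 1: "S1 \<noteq> 0" "coprime S1 (cyclotomic n)" "x = to_fract P1 / to_fract S1"
    using assms(1) unfolding good_def by blast
  obtain P2 S2 where 2: "S2 \<noteq> 0" "coprime S2 (cyclotomic n)" "y = to_fract P2 / to_fract S2"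
    using assms(2) unfolding good_def by blast
  show ?thesis
  proof (rule goodI[of "S1 * S2" _ _ "P1 * S2 + P2 * S1"])
    show "S1 * S2 \<noteq> 0" using 1 2 by simp
    show "coprime (S1 * S2) (cyclotomic n)" using 1 2 by (simp add: coprime_mult_cyc)
    show "x + y = to_fract (P1 * S2 + P2 * S1) / to_fract (S1 * S2)"
      using 1 2 by (simp add: field_simps)
  qed
qed

lemma good_mult:
  assumes "good n x" "good n y" shows "good n (x * y)"
proof -
  obtain P1 S1 where 1: "S1 \<noteq> 0" "coprime S1 (cyclotomic n)" "x = to_fract P1 / to_fract S1"
    using assms(1) unfolding good_def by blast
  obtain P2 S2 where 2: "S2 \<noteq> 0" "coprime S2 (cyclotomic n)" "y = to_fract P2 / to_fract S2"
    using assms(2) unfolding good_def by blast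
  show ?thesis
  proof (rule goodI[of "S1 * S2" _ _ "P1 * P2"])
    show "S1 * S2 \<noteq> 0" using 1 2 by simp
    show "coprime (S1 * S2) (cyclotomic n)" using 1 2 by (simp add: coprime_mult_cyc)
    show "x * y = to_fract (P1 * P2) / to_fract (S1 * S2)"
      using 1 2 by simp
  qed
qed

lemma good_uminus:
  assumes "good n x" shows "good n (- x)"
proof -
  obtain P1 S1 where 1: "S1 \<noteq> 0" "coprime S1 (cyclotomic n)" "x = to_fract P1 / to_fract S1"
    using assms(1) unfolding good_def by blast
  show ?thesis by (rule goodI[of S1 _ _ "- P1"]) (use 1 in simp_all)
qed

lemma good_diff: "good n x \<Longrightarrow> good n y \<Longrightarrow> good n (x - y)"
  using good_add[of n x "- y"] good_uminus[of n y] by simp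

lemma good_sum: "finite A \<Longrightarrow> (\<And>a. a \<in> A \<Longrightarrow> good n (f a)) \<Longrightarrow> good n (sum f A)"
  by (induct A rule: finite_induct) (simp_all add: good_0 good_add)

lemma good_prod: "finite A \<Longrightarrow> (\<And>a. a \<in> A \<Longrightarrow> good n (f a)) \<Longrightarrow> good n (prod f A)"
  by (induct A rule: finite_induct) (simp_all add: good_1 good_mult)

lemma good_power: "good n x \<Longrightarrow> good n (x ^ k)"
  by (induct k) (simp_all add: good_1 good_mult)

lemma good_qvar_pow: "good n (qvar ^ k)"
  by (simp add: qvar_pow good_to_fract)

lemma good_qvar_inv_pow: "good n (inverse qvar ^ k)"
proof (rule goodI[of "[:0,1:] ^ k" _ _ 1])
  show "[:0,1:] ^ k \<noteq> (0 :: complex poly)" by simp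
  show "coprime ([:0,1:] ^ k) (cyclotomic n)" by (rule coprime_xpow_cyc)
  show "inverse qvar ^ k = to_fract 1 / to_fract ([:0,1:] ^ k)"
    by (simp add: power_inverse qvar_pow divide_inverse)
qed

lemma good_qvar_powi: "good n (qvar powi k)"
  by (simp add: power_int_def good_qvar_pow good_qvar_inv_pow)

lemma good_qpoch: "good n x \<Longrightarrow> good n (qpoch x m)"
  unfolding qpoch_def
  by (intro good_prod good_diff good_1 good_mult good_qvar_pow) auto

lemma good_qbinom: "good n (qbinom N k)"
proof (induct N arbitrary: k)
  case 0
  then show ?case by (cases k) (simp_all add: good_1 good_0 qbinom_gt)
next
  case (Suc N)
  then show ?case
    by (cases k) (simp_all add: good_1 qbinom_pascal good_add good_mult good_qvar_pow del: power_Suc)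
qed

lemma cyc_cong_iff: "cyc_cong n A B \<longleftrightarrow> (\<exists>g. good n g \<and> A - B = g * to_fract (cyclotomic n))"
proof
  assume "cyc_cong n A B"
  then obtain p s where ps: "s \<noteq> 0" "coprime s (cyclotomic n)" "A - B = Fract p s * Fract (cyclotomic n) 1"
    unfolding cyc_cong_def by blast
  have "good n (Fract p s)" using ps by (intro goodI[of s _ _ p]) (simp_all add: Fract_conv_to_fract)
  moreover have "A - B = Fract p s * to_fract (cyclotomic n)" using ps by (simp add: to_fract_def)
  ultimately show "\<exists>g. good n g \<and> A - B = g * to_fract (cyclotomic n)" by blast
next
  assume "\<exists>g. good n g \<and> A - B = g * to_fract (cyclotomic n)"
  then obtain g P S where g: "S \<noteq> 0" "coprime S (cyclotomic n)" "g = to_fract P / to_fract S"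
     "A - B = g * to_fract (cyclotomic n)" unfolding good_def by blast
  then show "cyc_cong n A B" unfolding cyc_cong_def
    by (intro exI[of _ P] exI[of _ S]) (simp add: Fract_conv_to_fract)
qed

lemma cong_refl: "cyc_cong n x x"
  unfolding cyc_cong_iff using good_0 by force

lemma cong_eq: "x = y \<Longrightarrow> cyc_cong n x y"
  using cong_refl by simp

lemma cong_sym: "cyc_cong n x y \<Longrightarrow> cyc_cong n y x"
  unfolding cyc_cong_iff
proof (elim exE conjE)
  fix g assume "good n g" "x - y = g * to_fract (cyclotomic n)"
  then show "\<exists>g. good n g \<and> y - x = g * to_fract (cyclotomic n)"
    by (intro exI[of _ "- g"]) (simp add: good_uminus algebra_simps)
qed

lemma cong_trans: "cyc_cong n x y \<Longrightarrow> cyc_cong n y z \<Longrightarrow> cyc_cong n x z"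
  unfolding cyc_cong_iff
proof (elim exE conjE)
  fix g h assume a: "good n g" "x - y = g * to_fract (cyclotomic n)"
    "good n h" "y - z = h * to_fract (cyclotomic n)"
  have "x - z = (x - y) + (y - z)" by simp
  also have "\<dots> = (g + h) * to_fract (cyclotomic n)" using a by (simp add: distrib_right)
  finally show "\<exists>g. good n g \<and> x - z = g * to_fract (cyclotomic n)"
    using good_add[OF a(1) a(3)] by blast
qed

lemma cong_add: "cyc_cong n x y \<Longrightarrow> cyc_cong n u v \<Longrightarrow> cyc_cong n (x + u) (y + v)"
  unfolding cyc_cong_iff
proof (elim exE conjE)
  fix g h assume a: "good n g" "x - y = g * to_fract (cyclotomic n)"
    "good n h" "u - v = h * to_fract (cyclotomic n)"
  have "x + u - (y + v) = (x - y) + (u - v)" by simp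
  also have "\<dots> = (g + h) * to_fract (cyclotomic n)" using a by (simp add: distrib_right)
  finally show "\<exists>g. good n g \<and> x + u - (y + v) = g * to_fract (cyclotomic n)"
    using good_add[OF a(1) a(3)] by blast
qed

lemma cong_mult: "good n c \<Longrightarrow> cyc_cong n x y \<Longrightarrow> cyc_cong n (c * x) (c * y)"
  unfolding cyc_cong_iff
proof (elim exE conjE)
  fix g assume "good n c" "good n g" "x - y = g * to_fract (cyclotomic n)"
  then show "\<exists>g. good n g \<and> c * x - c * y = g * to_fract (cyclotomic n)"
    by (intro exI[of _ "c * g"]) (simp add: good_mult algebra_simps flip: right_diff_distrib)
qed

lemma cong_qn: assumes "1 \<le> n" shows "cyc_cong n (qvar ^ n) 1"
proof -
  obtain h where h: "[:0,1:] ^ n - 1 = cyclotomic n * h" using cyc_dvd_xn[OF assms] by (elim dvdE)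
  have "qvar ^ n - 1 = to_fract h * to_fract (cyclotomic n)"
    by (simp add: qvar_pow flip: to_fract_1 to_fract_diff to_fract_mult) (simp add: h mult.commute)
  then show ?thesis unfolding cyc_cong_iff using good_to_fract by blast
qed

lemma cong_cancel:
  assumes "C \<noteq> 0" "coprime C (cyclotomic n)" "cyc_cong n (to_fract C * x) 0"
  shows "cyc_cong n x 0"
proof -
  obtain g where g: "good n g" "to_fract C * x - 0 = g * to_fract (cyclotomic n)"
    using assms(3) unfolding cyc_cong_iff by blast
  obtain P S where PS: "S \<noteq> 0" "coprime S (cyclotomic n)" "g = to_fract P / to_fract S"
    using g(1) unfolding good_def by blast
  have "x = to_fract P / to_fract (S * C) * to_fract (cyclotomic n)"
    using g(2) PS assms(1) by (simp add: field_simps)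
  moreover have "good n (to_fract P / to_fract (S * C))"
    using PS assms by (intro goodI[of "S * C" _ _ P]) (simp_all add: coprime_mult_cyc)
  ultimately show ?thesis unfolding cyc_cong_iff by force
qed

lemma poly_id1:
  fixes x y q :: "'a::comm_ring_1"
  shows "x * (1 - x^2*y*q^3) * (1 - x^2*y^2*q^3) + x^2*q*(1 - y*q)*(1 - x^2*y^2*q^3)
    = (x + x^2*q)*(1 - y*q)*(1 - x^2*y*q^3) + x*y*q*(1 - x^2*y*q^2)*(1 - x^2*y*q^3) + x^4*y*q^4*(1-y)*(1 - y*q)"
  by (simp add: algebra_simps eval_nat_numeral)

lemma poly_id3:
  fixes x y q :: "'a::comm_ring_1"
  shows "(1 + x*y*q) * (x * (1 - x^2*y*q^2) + x^2*q*(1 - y)) = (x + x^2*q) * (1 - x^2*y^2*q^2)"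
  by (simp add: algebra_simps eval_nat_numeral)

lemma I3_field:
  fixes x y q B0 B1 C1 :: "'a::field"
  assumes n1: "1 - x^2*y*q^2 \<noteq> 0"
  and r1: "(1 - x^2*y*q^2) * B1 = (1 - y) * B0"
  and r3: "(1 - x^2*y*q^2) * C1 = (1 - x^2*y^2*q^2) * B0"
  shows "(1 + x*y*q) * (x * B0 + x^2 * q * B1) = (x + x^2*q) * C1"
proof -
  define U1 where "U1 = 1 - x^2*y*q^2"
  have r1': "U1 * B1 = (1 - y) * B0" and r3': "U1 * C1 = (1 - x^2*y^2*q^2) * B0"
    using r1 r3 by (simp_all add: U1_def)
  have "U1 * ((1 + x*y*q) * (x * B0 + x^2 * q * B1)) = (1 + x*y*q) * (x * U1 * B0 + x^2 * q * (U1 * B1))"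
    by (simp add: algebra_simps)
  also have "\<dots> = (1 + x*y*q) * (x * U1 * B0 + x^2 * q * ((1 - y) * B0))"
    by (simp only: r1')
  also have "\<dots> = (1 + x*y*q) * (x * (1 - x^2*y*q^2) + x^2*q*(1 - y)) * B0"
    by (simp add: U1_def algebra_simps)
  also have "\<dots> = (x + x^2*q) * (1 - x^2*y^2*q^2) * B0" by (simp only: poly_id3)
  also have "\<dots> = (x + x^2*q) * ((1 - x^2*y^2*q^2) * B0)" by (simp only: mult.assoc)
  also have "\<dots> = (x + x^2*q) * (U1 * C1)" by (simp only: r3')
  also have "\<dots> = U1 * ((x + x^2*q) * C1)" by (simp add: algebra_simps)
  finally show ?thesis using n1 unfolding U1_def[symmetric] by simp
qed

lemma I1_field:
  fixes x y q C0 C1 C2 D1 D2 :: "'a::field"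
  assumes n1: "1 - x^2*y*q^2 \<noteq> 0" and n3: "1 - x^2*y*q^3 \<noteq> 0"
  and h1: "(1 - x^2*y*q^2) * C1 = (1 - y*q) * C0"
  and h2: "(1 - x^2*y*q^2) * D1 = (1 - x^2*y^2*q^3) * C0"
  and h3: "(1 - x^2*y*q^3) * C2 = (1 - y) * C1"
  and h4: "(1 - x^2*y*q^3) * D2 = (1 - y*q) * D1"
  shows "x * D1 + x^2 * q * D2 = (x + x^2*q) * C1 + x*y*q * C0 + x^4*y*q^4 * C2"
proof -
  define U1 U2 U3 W where "U1 = 1 - x^2*y*q^2" and "U2 = 1 - y*q" and "U3 = 1 - x^2*y*q^3"
    and "W = 1 - x^2*y^2*q^3"
  have h1': "U1 * C1 = U2 * C0" and h2': "U1 * D1 = W * C0" and h3': "U3 * C2 = (1 - y) * C1"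
    and h4': "U3 * D2 = U2 * D1"
    using h1 h2 h3 h4 by (simp_all add: U1_def U2_def U3_def W_def)
  have "U1 * U3 * (x * D1 + x^2 * q * D2) = x * U3 * (U1 * D1) + x^2 * q * U1 * (U3 * D2)"
    by (simp add: algebra_simps)
  also have "\<dots> = x * U3 * (W * C0) + x^2 * q * U1 * (U2 * D1)"
    by (simp only: h2' h4')
  also have "\<dots> = x * U3 * (W * C0) + x^2 * q * U2 * (U1 * D1)"
    by (simp add: algebra_simps)
  also have "\<dots> = x * U3 * (W * C0) + x^2 * q * U2 * (W * C0)"
    by (simp only: h2')
  also have "\<dots> = (x * U3 * W + x^2 * q * U2 * W) * C0"
    by (simp add: algebra_simps)
  also have "x * U3 * W + x^2 * q * U2 * W = (x + x^2*q) * U2 * U3 + x*y*q * U1 * U3 + x^4*y*q^4*(1-y)*U2"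
    unfolding U1_def U2_def U3_def W_def using poly_id1[of x y q] by (simp add: mult.assoc)
  also have "((x + x^2*q) * U2 * U3 + x*y*q * U1 * U3 + x^4*y*q^4*(1-y)*U2) * C0
      = (x + x^2*q) * U3 * (U2 * C0) + x*y*q * U1 * U3 * C0 + x^4*y*q^4*(1-y)*(U2 * C0)"
    by (simp add: algebra_simps)
  also have "\<dots> = (x + x^2*q) * U3 * (U1 * C1) + x*y*q * U1 * U3 * C0 + x^4*y*q^4*(1-y)*(U1 * C1)"
    by (simp only: h1')
  also have "\<dots> = (x + x^2*q) * U3 * (U1 * C1) + x*y*q * U1 * U3 * C0 + x^4*y*q^4*U1*((1-y) * C1)"
    by (simp add: algebra_simps)
  also have "\<dots> = (x + x^2*q) * U3 * (U1 * C1) + x*y*q * U1 * U3 * C0 + x^4*y*q^4*U1*(U3 * C2)"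
    by (simp only: h3')
  also have "\<dots> = U1 * U3 * ((x + x^2*q) * C1 + x*y*q * C0 + x^4*y*q^4 * C2)"
    by (simp add: algebra_simps)
  finally have "U1 * U3 * (x * D1 + x^2 * q * D2) = U1 * U3 * ((x + x^2*q) * C1 + x*y*q * C0 + x^4*y*q^4 * C2)" .
  moreover have "U1 * U3 \<noteq> 0" using n1 n3 by (simp add: U1_def U3_def)
  ultimately show ?thesis by simp
qed


lemma pw3: "k = d * i + s * j + c \<Longrightarrow> qvar ^ k = (qvar ^ d) ^ i * (qvar ^ s) ^ j * qvar ^ c"
  by (simp add: power_add power_mult)

lemma core:
  fixes d s a N :: nat
  assumes a_def: "a = 2*d+s+1" and N_def: "N = 2*d+2 * s+1"
  shows "qvar^d * qbinom (Suc (Suc N)) (Suc a) + qvar^(2*d+1) * qbinom (Suc (Suc N)) (Suc (Suc a))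
     = (1 + qvar^(d+1+s)) * (qvar^d * qbinom N a + qvar^(2*d+1) * qbinom N (Suc a))
       + qvar^(d+1+s) * qbinom (Suc N) a + qvar^(d+1+s+3*d+3) * qbinom (Suc N) (Suc (Suc a))"
    and "(1 + qvar^(d+1+s)) * (qvar^d * qbinom N a + qvar^(2*d+1) * qbinom N (Suc a))
       = (qvar^d + qvar^(2*d+1)) * qbinom (Suc N) (Suc a)"
proof -
  have F1: "(1 - qvar ^ Suc a) * qbinom N (Suc a) = (1 - qvar ^ s) * qbinom N a"
    using qbinom_QR[of a N] by (simp add: a_def N_def del: power_Suc)
  have F2: "(1 - qvar ^ Suc s) * qbinom (Suc N) a = (1 - qvar ^ Suc N) * qbinom N a"
  proof -
    have "Suc N - a = Suc s" by (simp add: a_def N_def)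
    then show ?thesis using qbinom_QT[of N a] by (simp del: power_Suc)
  qed
  have F3: "(1 - qvar ^ Suc a) * qbinom (Suc N) (Suc a) = (1 - qvar ^ Suc N) * qbinom N a"
    by (rule qbinom_QS)
  have F4: "(1 - qvar ^ Suc (Suc a)) * qbinom (Suc N) (Suc (Suc a)) = (1 - qvar ^ s) * qbinom (Suc N) (Suc a)"
    using qbinom_QR[of "Suc a" "Suc N"] by (simp add: a_def N_def del: power_Suc)
  have F5: "(1 - qvar ^ Suc a) * qbinom (Suc (Suc N)) (Suc a) = (1 - qvar ^ Suc (Suc N)) * qbinom (Suc N) a"
    by (rule qbinom_QS)
  have F6: "(1 - qvar ^ Suc (Suc a)) * qbinom (Suc (Suc N)) (Suc (Suc a)) = (1 - qvar ^ Suc s) * qbinom (Suc (Suc N)) (Suc a)"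
    using qbinom_QR[of "Suc a" "Suc (Suc N)"] by (simp add: a_def N_def del: power_Suc)
  define x y q where "x = qvar ^ d" and "y = qvar ^ s" and "q = qvar"
  have p1: "qvar ^ Suc a = x^2*y*q^2" unfolding x_def y_def q_def using pw3[of "Suc a" d 2 s 1 2] by (simp add: a_def)
  have p2: "qvar ^ Suc (Suc a) = x^2*y*q^3" unfolding x_def y_def q_def using pw3[of "Suc (Suc a)" d 2 s 1 3] by (simp add: a_def)
  have p3: "qvar ^ Suc s = y*q" unfolding y_def q_def by simp
  have p4: "qvar ^ Suc N = x^2*y^2*q^2" unfolding x_def y_def q_def using pw3[of "Suc N" d 2 s 2 2] by (simp add: N_def)
  have p5: "qvar ^ Suc (Suc N) = x^2*y^2*q^3" unfolding x_def y_def q_def using pw3[of "Suc (Suc N)" d 2 s 2 3] by (simp add: N_def)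
  have p6: "qvar ^ (d+1+s) = x*y*q" unfolding x_def y_def q_def using pw3[of "d+1+s" d 1 s 1 1] by simp
  have p7: "qvar ^ (2*d+1) = x^2*q" unfolding x_def q_def using pw3[of "2*d+1" d 2 s 0 1] by simp
  have p8: "qvar ^ (d+1+s+3*d+3) = x^4*y*q^4" unfolding x_def y_def q_def using pw3[of "d+1+s+3*d+3" d 4 s 1 4] by simp
  have p9: "qvar ^ s = y" "qvar ^ d = x" by (simp_all add: x_def y_def)
  have n1: "1 - x^2*y*q^2 \<noteq> 0" using one_minus_qpow_nz[of "Suc a"] p1 by simp
  have n3: "1 - x^2*y*q^3 \<noteq> 0" using one_minus_qpow_nz[of "Suc (Suc a)"] p2 by simp
  note F = F1 F2 F3 F4 F5 F6
  note P = p1 p2 p3 p4 p5 p6 p7 p8 p9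
  have r1: "(1 - x^2*y*q^2) * qbinom N (Suc a) = (1 - y) * qbinom N a" using F1 unfolding P .
  have r3: "(1 - x^2*y*q^2) * qbinom (Suc N) (Suc a) = (1 - x^2*y^2*q^2) * qbinom N a" using F3 unfolding P .
  have h1: "(1 - x^2*y*q^2) * qbinom (Suc N) (Suc a) = (1 - y*q) * qbinom (Suc N) a"
    using F2 F3 unfolding P by simp
  have h2: "(1 - x^2*y*q^2) * qbinom (Suc (Suc N)) (Suc a) = (1 - x^2*y^2*q^3) * qbinom (Suc N) a"
    using F5 unfolding P .
  have h3: "(1 - x^2*y*q^3) * qbinom (Suc N) (Suc (Suc a)) = (1 - y) * qbinom (Suc N) (Suc a)"
    using F4 unfolding P .
  have h4: "(1 - x^2*y*q^3) * qbinom (Suc (Suc N)) (Suc (Suc a)) = (1 - y*q) * qbinom (Suc (Suc N)) (Suc a)"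
    using F6 unfolding P .
  have I3: "(1 + x*y*q) * (x * qbinom N a + x^2 * q * qbinom N (Suc a)) = (x + x^2*q) * qbinom (Suc N) (Suc a)"
    by (rule I3_field[OF n1 r1 r3])
  have I1: "x * qbinom (Suc (Suc N)) (Suc a) + x^2 * q * qbinom (Suc (Suc N)) (Suc (Suc a))
     = (x + x^2*q) * qbinom (Suc N) (Suc a) + x*y*q * qbinom (Suc N) a + x^4*y*q^4 * qbinom (Suc N) (Suc (Suc a))"
    by (rule I1_field[OF n1 n3 h1 h2 h3 h4])
  show "(1 + qvar^(d+1+s)) * (qvar^d * qbinom N a + qvar^(2*d+1) * qbinom N (Suc a))
       = (qvar^d + qvar^(2*d+1)) * qbinom (Suc N) (Suc a)"
    unfolding P by (rule I3)
  show "qvar^d * qbinom (Suc (Suc N)) (Suc a) + qvar^(2*d+1) * qbinom (Suc (Suc N)) (Suc (Suc a))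
     = (1 + qvar^(d+1+s)) * (qvar^d * qbinom N a + qvar^(2*d+1) * qbinom N (Suc a))
       + qvar^(d+1+s) * qbinom (Suc N) a + qvar^(d+1+s+3*d+3) * qbinom (Suc N) (Suc (Suc a))"
    unfolding P I3 using I1 by simp
qed

definition W :: "nat \<Rightarrow> nat \<Rightarrow> ratfun" where
  "W n k = qpoch (- (qvar ^ (k + 1))) (n - 1 - k)"
definition S1 :: "nat \<Rightarrow> nat \<Rightarrow> ratfun" where
  "S1 n d = (\<Sum>k<n. qvar ^ k * qbinom (2 * k) (k + d) * W n k)"
definition S2 :: "nat \<Rightarrow> nat \<Rightarrow> ratfun" where
  "S2 n d = (\<Sum>k<n. qvar ^ k * qbinom (2 * k) (k + d) * (W n k)^2)"
definition V :: "nat \<Rightarrow> nat \<Rightarrow> ratfun" where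
  "V n d = qvar ^ d * qbinom (2*n-1) (n+d) + qvar^(2*d+1) * qbinom (2*n-1) (n+d+1)"

lemma W_Suc: assumes "k < n" shows "W (Suc n) k = (1 + qvar^n) * W n k"
proof -
  have e: "Suc n - 1 - k = Suc (n - 1 - k)" using assms by simp
  have e2: "k + 1 + (n - 1 - k) = n" using assms by simp
  have p: "qvar ^ (k + 1) * qvar ^ (n - 1 - k) = qvar ^ n"
    by (simp only: power_add[symmetric] e2)
  show ?thesis unfolding W_def e qpoch_Suc using p by (simp add: algebra_simps)
qed

lemma W_last: "W (Suc n) n = 1" by (simp add: W_def)

lemma S1_Suc: "S1 (Suc n) d = (1 + qvar^n) * S1 n d + qvar^n * qbinom (2*n) (n+d)"
proof -
  have "S1 (Suc n) d = (\<Sum>k<n. qvar ^ k * qbinom (2 * k) (k + d) * W (Suc n) k) + qvar^n * qbinom (2*n) (n+d)"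
    unfolding S1_def by (simp add: W_last)
  also have "(\<Sum>k<n. qvar ^ k * qbinom (2 * k) (k + d) * W (Suc n) k) = (\<Sum>k<n. (1 + qvar^n) * (qvar ^ k * qbinom (2 * k) (k + d) * W n k))"
    by (rule sum.cong) (simp_all add: W_Suc algebra_simps)
  also have "\<dots> = (1 + qvar^n) * S1 n d" unfolding S1_def by (simp add: sum_distrib_left)
  finally show ?thesis .
qed

lemma S2_Suc: "S2 (Suc n) d = (1 + qvar^n)^2 * S2 n d + qvar^n * qbinom (2*n) (n+d)"
proof -
  have "S2 (Suc n) d = (\<Sum>k<n. qvar ^ k * qbinom (2 * k) (k + d) * (W (Suc n) k)^2) + qvar^n * qbinom (2*n) (n+d)"
    unfolding S2_def by (simp add: W_last)
  also have "(\<Sum>k<n. qvar ^ k * qbinom (2 * k) (k + d) * (W (Suc n) k)^2) = (\<Sum>k<n. (1 + qvar^n)^2 * (qvar ^ k * qbinom (2 * k) (k + d) * (W n k)^2))"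
    by (rule sum.cong) (simp_all add: W_Suc power_mult_distrib mult_ac)
  also have "\<dots> = (1 + qvar^n)^2 * S2 n d" unfolding S2_def by (simp add: sum_distrib_left)
  finally show ?thesis .
qed

lemma S1_1: "S1 (Suc 0) d = qbinom 0 d" by (simp add: S1_def W_def)
lemma S2_1: "S2 (Suc 0) d = qbinom 0 d" by (simp add: S2_def W_def)

lemma VI_aux:
  fixes d s :: nat
  shows "V (Suc (d+1+s)) d = (1 + qvar^(d+1+s)) * V (d+1+s) d + qvar^(d+1+s) * qbinom (2*(d+1+s)) ((d+1+s)+d)
            + qvar^((d+1+s)+3*d+3) * qbinom (2*(d+1+s)) ((d+1+s)+d+2)"
    and "(1 + qvar^(d+1+s)) * V (d+1+s) d = (qvar^d + qvar^(2*d+1)) * qbinom (2*(d+1+s)) ((d+1+s)+d+1)"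
proof -
  have e: "2 * Suc (d+1+s) - 1 = Suc (Suc (2*d+2 * s+1))" "Suc (d+1+s) + d = Suc (2*d+s+1)"
    "Suc (d+1+s) + d + 1 = Suc (Suc (2*d+s+1))" "2*(d+1+s) - 1 = 2*d+2 * s+1" "(d+1+s)+d = 2*d+s+1"
    "(d+1+s)+d+1 = Suc (2*d+s+1)" "2*(d+1+s) = Suc (2*d+2 * s+1)" "(d+1+s)+d+2 = Suc (Suc (2*d+s+1))"
    by simp_all
  have dsd: "d + s + d = 2 * d + s" by simp
  note c = core[of "2*d+s+1" d s "2*d+2 * s+1", OF refl refl]
  show "V (Suc (d+1+s)) d = (1 + qvar^(d+1+s)) * V (d+1+s) d + qvar^(d+1+s) * qbinom (2*(d+1+s)) ((d+1+s)+d)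
            + qvar^((d+1+s)+3*d+3) * qbinom (2*(d+1+s)) ((d+1+s)+d+2)"
    using c(1) by (simp add: V_def dsd)
  show "(1 + qvar^(d+1+s)) * V (d+1+s) d = (qvar^d + qvar^(2*d+1)) * qbinom (2*(d+1+s)) ((d+1+s)+d+1)"
    using c(2) by (simp add: V_def dsd)
qed

lemma V_big: "1 \<le> n \<Longrightarrow> n \<le> d \<Longrightarrow> V n d = 0"
  by (simp add: V_def qbinom_gt)

lemma VI1: assumes "1 \<le> n"
  shows "V (Suc n) d = (1 + qvar^n) * V n d + qvar^n * qbinom (2*n) (n+d) + qvar^(n+3*d+3) * qbinom (2*n) (n+d+2)"
proof (cases "d \<le> n - 1")
  case True
  then obtain s where n: "n = d+1+s" using assms by (metis add.commute add_Suc_right le_add_diff_inverse le_diff_conv plus_1_eq_Suc)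
  show ?thesis unfolding n by (rule VI_aux(1))
next
  case False
  then have "n \<le> d" by simp
  then have V0: "V n d = 0" using V_big assms by simp
  show ?thesis
  proof (cases "d = n")
    case True
    have nn: "n + n = 2 * n" by simp
    show ?thesis using True assms by (simp add: V0 V_def qbinom_gt nn)
  next
    case False
    then have "n < d" using \<open>n \<le> d\<close> by simp
    then show ?thesis using assms by (simp add: V0 V_def qbinom_gt)
  qed
qed

lemma VI3: assumes "1 \<le> n"
  shows "(1 + qvar^n) * V n d = (qvar^d + qvar^(2*d+1)) * qbinom (2*n) (n+d+1)"
proof (cases "d \<le> n - 1")
  case True
  then obtain s where n: "n = d+1+s" using assms by (metis add.commute add_Suc_right le_add_diff_inverse le_diff_conv plus_1_eq_Suc)
  show ?thesis unfolding n by (rule VI_aux(2))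
next
  case False
  then have "n \<le> d" by simp
  then show ?thesis using V_big assms by (simp add: qbinom_gt)
qed

lemma R1: "1 \<le> n \<Longrightarrow> S1 n d + qvar^(3*d+3) * S1 n (d+2) = V n d"
proof (induct n arbitrary: d rule: nat_induct_at_least)
  case base
  show ?case by (cases d) (simp_all add: S1_1 V_def qbinom_gt)
next
  case (Suc n)
  have "S1 (Suc n) d + qvar^(3*d+3) * S1 (Suc n) (d+2)
      = (1 + qvar^n) * (S1 n d + qvar^(3*d+3) * S1 n (d+2)) + qvar^n * qbinom (2*n) (n+d)
        + qvar^(n+3*d+3) * qbinom (2*n) (n+d+2)"
    by (simp add: S1_Suc algebra_simps power_add)
  also have "\<dots> = V (Suc n) d" using Suc.hyps(2)[of d] VI1[OF Suc.hyps(1)] by simp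
  finally show ?case .
qed

lemma R2: "1 \<le> n \<Longrightarrow> S2 n d - (qvar^d + qvar^(2*d+1)) * S2 n (d+1) + qvar^(3*d+3) * S2 n (d+2) = V n d"
proof (induct n arbitrary: d rule: nat_induct_at_least)
  case base
  show ?case by (cases d) (simp_all add: S2_1 V_def qbinom_gt)
next
  case (Suc n)
  define c where "c = qvar^d + qvar^(2*d+1)"
  have e: "n + (d + 1) = n + d + 1" "n + (d + 2) = n + d + 2" by simp_all
  have "S2 (Suc n) d - c * S2 (Suc n) (d+1) + qvar^(3*d+3) * S2 (Suc n) (d+2)
      = (1 + qvar^n)^2 * (S2 n d - c * S2 n (d+1) + qvar^(3*d+3) * S2 n (d+2))
        + qvar^n * qbinom (2*n) (n+d) - qvar^n * c * qbinom (2*n) (n+d+1)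
        + qvar^(n+3*d+3) * qbinom (2*n) (n+d+2)"
    by (simp add: S2_Suc algebra_simps power_add e)
  also have "\<dots> = (1 + qvar^n) * ((1 + qvar^n) * V n d)
        + qvar^n * qbinom (2*n) (n+d) - qvar^n * c * qbinom (2*n) (n+d+1)
        + qvar^(n+3*d+3) * qbinom (2*n) (n+d+2)"
    using Suc.hyps(2)[of d] by (simp add: c_def power2_eq_square)
  also have "\<dots> = (1 + qvar^n) * (c * qbinom (2*n) (n+d+1))
        + qvar^n * qbinom (2*n) (n+d) - qvar^n * c * qbinom (2*n) (n+d+1)
        + qvar^(n+3*d+3) * qbinom (2*n) (n+d+2)"
    using VI3[OF Suc.hyps(1), of d] by (simp add: c_def)
  also have "\<dots> = c * qbinom (2*n) (n+d+1) + qvar^n * qbinom (2*n) (n+d)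
        + qvar^(n+3*d+3) * qbinom (2*n) (n+d+2)"
    by (simp add: algebra_simps)
  also have "\<dots> = (1 + qvar^n) * V n d + qvar^n * qbinom (2*n) (n+d)
        + qvar^(n+3*d+3) * qbinom (2*n) (n+d+2)"
    using VI3[OF Suc.hyps(1), of d] by (simp add: c_def)
  also have "\<dots> = V (Suc n) d" using VI1[OF Suc.hyps(1)] by simp
  finally show ?case unfolding c_def .
qed

lemma cong_diffI: "A - B = D \<Longrightarrow> cyc_cong n D 0 \<Longrightarrow> cyc_cong n A B"
  unfolding cyc_cong_iff by simp

lemma cong_zero_mult: assumes "1 \<le> n" "good n c" shows "cyc_cong n (c * (1 - qvar^n)) 0"
proof -
  have "cyc_cong n (c * 1) (c * qvar^n)" by (rule cong_mult[OF assms(2) cong_sym[OF cong_qn[OF assms(1)]]])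
  then show ?thesis unfolding cyc_cong_iff by (simp add: algebra_simps)
qed

lemma cong_mult0: "good n c \<Longrightarrow> cyc_cong n x 0 \<Longrightarrow> cyc_cong n (c * x) 0"
  using cong_mult[of n c x 0] by simp

lemma poly_id_V:
  fixes x y q :: "'a::comm_ring_1"
  shows "x*(1 - x^2*y*q^2) + x^2*q*(1-y) = x*(1+x*q)*(1 - x*y*q)"
  by (simp add: algebra_simps eval_nat_numeral)

lemma V_cong0:
  assumes "1 \<le> n" "d + 2 \<le> n"
  shows "cyc_cong n (V n d) 0"
proof -
  obtain t where n: "n = d + 2 + t" using assms(2) by (metis le_add_diff_inverse)
  define X where "X = qbinom (2*n-1) (n+d)"
  define B1 where "B1 = qbinom (2*n-1) (n+d+1)"
  have F: "(1 - qvar ^ Suc (n+d)) * B1 = (1 - qvar ^ (Suc t)) * X"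
  proof -
    have "2*n-1-(n+d) = Suc t" using n by simp
    then show ?thesis using qbinom_QR[of "n+d" "2*n-1"] by (simp add: X_def B1_def del: power_Suc)
  qed
  define x y q where "x = qvar ^ d" and "y = qvar ^ Suc t" and "q = qvar"
  have p1: "qvar ^ Suc (n+d) = x^2*y*q^2" unfolding x_def y_def q_def using pw3[of "Suc (n+d)" d 2 "Suc t" 1 2] n by simp
  have p2: "qvar ^ n = x*y*q" unfolding x_def y_def q_def using pw3[of n d 1 "Suc t" 1 1] n by simp
  have p3: "qvar ^ (2*d+1) = x^2*q" unfolding x_def q_def using pw3[of "2*d+1" d 2 "Suc t" 0 1] by simp
  have p4: "qvar ^ (d+1) = x*q" unfolding x_def q_def by simp
  have key: "(1 - qvar ^ Suc (n+d)) * V n d = (qvar^d * (1 + qvar^(d+1)) * X) * (1 - qvar^n)"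
  proof -
    have "(1 - qvar ^ Suc (n+d)) * V n d = x * (1 - x^2*y*q^2) * X + x^2*q * ((1 - x^2*y*q^2) * B1)"
      unfolding V_def X_def[symmetric] B1_def[symmetric] p1 p3 by (simp add: x_def algebra_simps)
    also have "\<dots> = x * (1 - x^2*y*q^2) * X + x^2*q * ((1 - y) * X)"
      using F unfolding p1 y_def by simp
    also have "\<dots> = (x*(1 - x^2*y*q^2) + x^2*q*(1-y)) * X" by (simp add: algebra_simps)
    also have "\<dots> = x*(1+x*q)*(1 - x*y*q) * X" by (simp only: poly_id_V)
    also have "\<dots> = (qvar^d * (1 + qvar^(d+1)) * X) * (1 - qvar^n)"
      unfolding p2 p4 by (simp add: x_def algebra_simps)
    finally show ?thesis .
  qed
  have good: "good n (qvar^d * (1 + qvar^(d+1)) * X)"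
    unfolding X_def by (intro good_mult good_add good_1 good_qvar_pow good_qbinom)
  have tf: "to_fract (1 - [:0,1:] ^ Suc (n+d)) = 1 - qvar ^ Suc (n+d)"
    by (simp only: to_fract_diff to_fract_1 qvar_pow)
  have c0: "cyc_cong n (to_fract (1 - [:0,1:] ^ Suc (n+d)) * V n d) 0"
    unfolding tf key by (rule cong_zero_mult[OF assms(1) good])
  show ?thesis
  proof (rule cong_cancel[OF _ _ c0])
    show "1 - [:0,1:] ^ Suc (n+d) \<noteq> (0 :: complex poly)"
    proof
      assume z: "1 - [:0,1:] ^ Suc (n+d) = (0 :: complex poly)"
      from arg_cong[OF z, of to_fract] have "1 - qvar ^ Suc (n+d) = 0" unfolding tf to_fract_0 .
      then show False using one_minus_qpow_nz[of "Suc (n+d)"] by simp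
    qed
    have "\<not> n dvd Suc (n + d)"
    proof
      assume "n dvd Suc (n+d)"
      then have "n dvd n + Suc d" by simp
      then have "n dvd Suc d" using dvd_add_right_iff[OF dvd_refl[of n], of "Suc d"] by simp
      then have "n \<le> Suc d" by (rule dvd_imp_le) simp
      then show False using assms(2) by simp
    qed
    then show "coprime (1 - [:0,1:] ^ Suc (n+d)) (cyclotomic n)"
      by (rule coprime_1_minus_xpow_cyc[OF assms(1)])
  qed
qed

lemma S1_top: "S1 n n = 0"
  unfolding S1_def by (rule sum.neutral) (auto simp: qbinom_gt)

lemma S2_top: "S2 n n = 0"
  unfolding S2_def by (rule sum.neutral) (auto simp: qbinom_gt)

lemma S1_top1: "S1 (Suc m) m = qvar ^ m"
proof -
  have "S1 (Suc m) m = (\<Sum>k<m. qvar ^ k * qbinom (2 * k) (k + m) * W (Suc m) k) + qvar ^ m * qbinom (2*m) (m+m) * W (Suc m) m"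
    unfolding S1_def by simp
  also have "(\<Sum>k<m. qvar ^ k * qbinom (2 * k) (k + m) * W (Suc m) k) = 0"
    by (rule sum.neutral) (auto simp: qbinom_gt)
  finally show ?thesis by (simp add: W_last mult_2)
qed

lemma S2_top1: "S2 (Suc m) m = qvar ^ m"
proof -
  have "S2 (Suc m) m = (\<Sum>k<m. qvar ^ k * qbinom (2 * k) (k + m) * (W (Suc m) k)^2) + qvar ^ m * qbinom (2*m) (m+m) * (W (Suc m) m)^2"
    unfolding S2_def by simp
  also have "(\<Sum>k<m. qvar ^ k * qbinom (2 * k) (k + m) * (W (Suc m) k)^2) = 0"
    by (rule sum.neutral) (auto simp: qbinom_gt)
  finally show ?thesis by (simp add: W_last mult_2)
qed

lemma good_S1: "good n (S1 n d)"
  unfolding S1_def W_def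
  by (intro good_sum good_mult good_qvar_pow good_qbinom good_qpoch good_uminus) auto

lemma good_S2: "good n (S2 n d)"
  unfolding S2_def W_def
  by (intro good_sum good_mult good_qvar_pow good_qbinom good_qpoch good_uminus good_power) auto

lemma S1_step: assumes "1 \<le> n" "d + 2 \<le> n"
  shows "cyc_cong n (S1 n d) (- (qvar^(3*d+3)) * S1 n (d+2))"
  by (rule cong_diffI[OF _ V_cong0[OF assms]]) (use R1[OF assms(1), of d] in simp)

lemma S1_even: assumes "1 \<le> n" shows "2 * i \<le> n \<Longrightarrow> cyc_cong n (S1 n (n - 2 * i)) 0"
proof (induct i)
  case 0
  then show ?case by (simp add: S1_top cong_refl)
next
  case (Suc i)
  define d where "d = n - 2 * Suc i"
  have d2: "d + 2 = n - 2 * i" "d + 2 \<le> n" using Suc.prems by (simp_all add: d_def)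
  have "cyc_cong n (S1 n d) (- (qvar^(3*d+3)) * S1 n (d+2))" by (rule S1_step[OF assms d2(2)])
  moreover have "cyc_cong n (- (qvar^(3*d+3)) * S1 n (d+2)) 0"
    unfolding d2(1) using Suc.hyps Suc.prems by (intro cong_mult0 good_uminus good_qvar_pow) simp
  ultimately show ?case unfolding d_def[symmetric] by (rule cong_trans)
qed

lemma S1_odd: assumes "1 \<le> n"
  shows "2 * i + 1 \<le> n \<Longrightarrow> cyc_cong n (S1 n (n - 1 - 2 * i)) ((-1)^i * qvar powi (3 * int i * (int i + int (n - 1 - 2 * i)) - 1))"
proof (induct i)
  case 0
  obtain m where n: "n = Suc m" using assms by (metis Suc_le_D One_nat_def)
  have c: "cyc_cong n (inverse qvar * qvar ^ n) (inverse qvar * 1)"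
    by (rule cong_mult[OF _ cong_qn[OF assms]]) (simp add: good_qvar_inv_pow[of n 1, simplified])
  have e: "inverse qvar * qvar ^ n = qvar ^ m" using qvar_nz by (simp add: n)
  have "cyc_cong n (qvar ^ m) (inverse qvar)" using c unfolding e mult_1_right .
  then show ?case by (simp add: n S1_top1 power_int_def)
next
  case (Suc i)
  define d where "d = n - 1 - 2 * Suc i"
  have d2: "d + 2 = n - 1 - 2 * i" "d + 2 \<le> n" using Suc.prems by (simp_all add: d_def)
  have c1: "cyc_cong n (S1 n d) (- (qvar^(3*d+3)) * S1 n (d+2))" by (rule S1_step[OF assms d2(2)])
  have ih: "cyc_cong n (S1 n (d+2)) ((-1)^i * qvar powi (3 * int i * (int i + int (d+2)) - 1))"
    unfolding d2(1) using Suc.hyps Suc.prems by simp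
  have c2: "cyc_cong n (- (qvar^(3*d+3)) * S1 n (d+2))
      (- (qvar^(3*d+3)) * ((-1)^i * qvar powi (3 * int i * (int i + int (d+2)) - 1)))"
    by (rule cong_mult[OF good_uminus[OF good_qvar_pow] ih])
  have e: "3 * int (Suc i) * (int (Suc i) + int d) - 1 = int (3*d+3) + (3 * int i * (int i + int (d+2)) - 1)"
    by (simp add: algebra_simps)
  have eq: "- (qvar^(3*d+3)) * ((-1)^i * qvar powi (3 * int i * (int i + int (d+2)) - 1))
      = (-1)^Suc i * qvar powi (3 * int (Suc i) * (int (Suc i) + int d) - 1)"
    unfolding e power_int_add[OF disjI1[OF qvar_nz]] power_int_of_nat by (simp add: algebra_simps)
  show ?case unfolding d_def[symmetric] using cong_trans[OF c1 c2] unfolding eq .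
qed

definition Rs :: "nat \<Rightarrow> nat \<Rightarrow> ratfun" where
  "Rs n d = (\<Sum>k\<in>{d+1..n}. qvar powi (int (n choose 2) + int (k choose 2) - (int d)^2))"

lemma pwi: "qvar powi (a + int m) = qvar powi a * qvar ^ m"
  by (simp add: power_int_add[OF disjI1[OF qvar_nz]] power_int_of_nat)

definition U :: "nat \<Rightarrow> nat \<Rightarrow> ratfun" where
  "U n j = (\<Sum>k\<in>{j..n}. qvar ^ (k choose 2))"

lemma U_step: "j \<le> n \<Longrightarrow> U n j = qvar ^ (j choose 2) + U n (Suc j)"
  unfolding U_def by (rule sum.atLeast_Suc_atMost)

lemma Rs_U:
  fixes a :: int
  assumes "a + int (4*d+4) = int (n choose 2) - (int d)^2"
  shows "Rs n d = qvar powi a * qvar ^ (4*d+4) * U n (d+1)"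
proof -
  have "Rs n d = (\<Sum>k\<in>{d+1..n}. qvar powi a * qvar ^ (4*d+4) * qvar ^ (k choose 2))"
    unfolding Rs_def
  proof (rule sum.cong[OF refl])
    fix k
    have "int (n choose 2) + int (k choose 2) - (int d)^2 = (a + int (4*d+4)) + int (k choose 2)"
      using assms by simp
    then show "qvar powi (int (n choose 2) + int (k choose 2) - (int d)^2) = qvar powi a * qvar ^ (4*d+4) * qvar ^ (k choose 2)"
      by (simp only: pwi)
  qed
  then show ?thesis unfolding U_def by (simp add: sum_distrib_left)
qed

lemma Rs_rec:
  assumes "d + 2 \<le> n"
  shows "Rs n d = (qvar^d + qvar^(2*d+1)) * Rs n (d+1) - qvar^(3*d+3) * Rs n (d+2)"
proof -
  define a where "a = int (n choose 2) - (int d + 2)^2"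
  have r0: "Rs n d = qvar powi a * qvar ^ (4*d+4) * U n (d+1)"
    by (rule Rs_U) (simp add: a_def algebra_simps power2_eq_square)
  have r1: "Rs n (d+1) = qvar powi (a - int (4*(d+1)+4) + int (2*d+3)) * qvar ^ (4*(d+1)+4) * U n (d+1+1)"
    by (rule Rs_U) (simp add: a_def algebra_simps power2_eq_square)
  have r2: "Rs n (d+2) = qvar powi (a - int (4*(d+2)+4)) * qvar ^ (4*(d+2)+4) * U n (d+2+1)"
    by (rule Rs_U) (simp add: a_def algebra_simps power2_eq_square)
  have i1: "d+1+1 = d+2" "d+2+1 = Suc (d+2)" by simp_all
  have e1: "qvar powi (a - int (4*(d+1)+4) + int (2*d+3)) * qvar ^ (4*(d+1)+4) = qvar powi a * qvar ^ (2*d+3)"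
  proof -
    have "qvar powi (a - int (4*(d+1)+4) + int (2*d+3)) * qvar ^ (4*(d+1)+4)
        = qvar powi (a - int (4*(d+1)+4) + int (2*d+3) + int (4*(d+1)+4))" by (simp only: pwi)
    also have "a - int (4*(d+1)+4) + int (2*d+3) + int (4*(d+1)+4) = a + int (2*d+3)" by simp
    finally show ?thesis by (simp only: pwi)
  qed
  have e2: "qvar powi (a - int (4*(d+2)+4)) * qvar ^ (4*(d+2)+4) = qvar powi a"
  proof -
    have "qvar powi (a - int (4*(d+2)+4)) * qvar ^ (4*(d+2)+4)
        = qvar powi (a - int (4*(d+2)+4) + int (4*(d+2)+4))" by (simp only: pwi)
    also have "a - int (4*(d+2)+4) + int (4*(d+2)+4) = a" by simp
    finally show ?thesis .
  qed
  have u1: "U n (d+1) = qvar ^ ((d+1) choose 2) + U n (d+2)" using U_step[of "d+1" n] assms by simp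
  have u2: "U n (d+2) = qvar ^ ((d+2) choose 2) + U n (Suc (d+2))" by (rule U_step) (use assms in simp)
  have ch: "(d+2) choose 2 = ((d+1) choose 2) + (d+1)"
    using binomial_Suc_Suc[of "d+1" 1] by (simp add: numeral_2_eq_2)
  define A E Z U3 where "A = qvar ^ ((d+1) choose 2)" and "E = qvar powi a" and "Z = qvar ^ d"
    and "U3 = U n (Suc (d+2))"
  have pA: "qvar ^ ((d+2) choose 2) = A * Z * qvar" unfolding ch A_def Z_def by (simp add: power_add)
  have p1: "qvar ^ (4*d+4) = Z^4 * qvar^4" unfolding Z_def by (simp add: power_add power_mult[symmetric] mult.commute)
  have p2: "qvar ^ (2*d+3) = Z^2 * qvar^3" unfolding Z_def by (simp add: power_add power_mult[symmetric] mult.commute)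
  have p3: "qvar ^ (2*d+1) = Z^2 * qvar" unfolding Z_def by (simp add: power_add power_mult[symmetric] mult.commute)
  have p4: "qvar ^ (3*d+3) = Z^3 * qvar^3" unfolding Z_def by (simp add: power_add power_mult[symmetric] mult.commute)
  have "Rs n d = E * (Z^4 * qvar^4) * (A + (A * Z * qvar + U3))"
    unfolding r0 u1 u2 pA p1 by (simp add: E_def A_def U3_def)
  moreover have "(qvar^d + qvar^(2*d+1)) * Rs n (d+1) - qvar^(3*d+3) * Rs n (d+2)
      = (Z + Z^2 * qvar) * (E * (Z^2 * qvar^3) * (A * Z * qvar + U3)) - Z^3 * qvar^3 * (E * U3)"
    unfolding r1 r2 i1 e1 e2 p2 p3 p4 u2[unfolded pA] by (simp add: E_def Z_def U3_def numeral_3_eq_3 add.assoc)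
  moreover have "E * (Z^4 * qvar^4) * (A + (A * Z * qvar + U3))
      = (Z + Z^2 * qvar) * (E * (Z^2 * qvar^3) * (A * Z * qvar + U3)) - Z^3 * qvar^3 * (E * U3)"
    by (simp add: algebra_simps eval_nat_numeral)
  ultimately show ?thesis by simp
qed

lemma Rs_top: "Rs n n = 0" by (simp add: Rs_def)

lemma two_choose2: "2 * (n choose 2) = n * (n - 1)"
proof (induct n)
  case (Suc m)
  have "(Suc m choose 2) = (m choose 1) + (m choose 2)" using binomial_Suc_Suc[of m 1] by (simp add: numeral_2_eq_2)
  then show ?case using Suc by (cases m) (simp_all add: algebra_simps)
qed simp

lemma Rs_top1: "Rs (Suc m) m = qvar ^ m"
proof -
  have e: "int (Suc m choose 2) + int (Suc m choose 2) - (int m)^2 = int m"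
  proof -
    have "2 * (Suc m choose 2) = Suc m * m" using two_choose2[of "Suc m"] by simp
    then have "2 * int (Suc m choose 2) = (int m + 1) * int m" by (metis of_nat_mult of_nat_Suc of_nat_numeral add.commute)
    then show ?thesis by (simp add: algebra_simps power2_eq_square)
  qed
  show ?thesis unfolding Rs_def using e by (simp add: power_int_of_nat)
qed

lemma S2_step: assumes "1 \<le> n" "d + 2 \<le> n"
  shows "cyc_cong n (S2 n d) ((qvar^d + qvar^(2*d+1)) * S2 n (d+1) + (- (qvar^(3*d+3))) * S2 n (d+2))"
  by (rule cong_diffI[OF _ V_cong0[OF assms]]) (use R2[OF assms(1), of d] in \<open>simp add: algebra_simps\<close>)

lemma S2_chain: assumes "1 \<le> n"
  shows "j + 1 \<le> n \<Longrightarrow> cyc_cong n (S2 n (n - j)) (Rs n (n - j)) \<and> cyc_cong n (S2 n (n - (j+1))) (Rs n (n - (j+1)))"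
proof (induct j)
  case 0
  obtain m where n: "n = Suc m" using assms by (metis Suc_le_D One_nat_def)
  show ?case by (simp add: n S2_top Rs_top S2_top1 Rs_top1 cong_refl)
next
  case (Suc j)
  define d where "d = n - (Suc j + 1)"
  have d: "d + 1 = n - Suc j" "d + 2 = n - j" "d + 2 \<le> n" using Suc.prems by (simp_all add: d_def)
  have ih: "cyc_cong n (S2 n (d+2)) (Rs n (d+2))" "cyc_cong n (S2 n (d+1)) (Rs n (d+1))"
    using Suc.hyps Suc.prems unfolding d by simp_all
  have "cyc_cong n (S2 n d) ((qvar^d + qvar^(2*d+1)) * S2 n (d+1) + (- (qvar^(3*d+3))) * S2 n (d+2))"
    by (rule S2_step[OF assms d(3)])
  moreover have "cyc_cong n ((qvar^d + qvar^(2*d+1)) * S2 n (d+1) + (- (qvar^(3*d+3))) * S2 n (d+2))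
     ((qvar^d + qvar^(2*d+1)) * Rs n (d+1) + (- (qvar^(3*d+3))) * Rs n (d+2))"
    by (intro cong_add cong_mult good_add good_qvar_pow good_uminus ih)
  moreover have "(qvar^d + qvar^(2*d+1)) * Rs n (d+1) + (- (qvar^(3*d+3))) * Rs n (d+2) = Rs n d"
    using Rs_rec[OF d(3)] by simp
  ultimately have "cyc_cong n (S2 n d) (Rs n d)" by (metis cong_trans)
  then show ?case using ih(2) unfolding d(1)[symmetric] d_def by simp
qed

theorem corollary1p2:
  fixes n d :: nat
  assumes "n \<ge> 1" and "d \<le> n - 1"
  shows "(int n mod 2 = int d mod 2 \<longrightarrow>
            cyc_cong n (\<Sum>k<n. qvar ^ k * qbinom (2 * k) (k + d) * qpoch (- (qvar ^ (k + 1))) (n - 1 - k)) 0)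
       \<and> (int n mod 4 = (int d + 1) mod 4 \<longrightarrow>
            cyc_cong n (\<Sum>k<n. qvar ^ k * qbinom (2 * k) (k + d) * qpoch (- (qvar ^ (k + 1))) (n - 1 - k))
              (qvar powi (3 * ((int n - 1)^2 - (int d)^2) div 4 - 1)))
       \<and> (int n mod 4 = (int d - 1) mod 4 \<longrightarrow>
            cyc_cong n (\<Sum>k<n. qvar ^ k * qbinom (2 * k) (k + d) * qpoch (- (qvar ^ (k + 1))) (n - 1 - k))
              (- (qvar powi (3 * ((int n - 1)^2 - (int d)^2) div 4 - 1))))
       \<and> cyc_cong n (\<Sum>k<n. qvar ^ k * qbinom (2 * k) (k + d) * (qpoch (- (qvar ^ (k + 1))) (n - 1 - k))^2)
              (\<Sum>k\<in>{d+1..n}. qvar powi (int (n choose 2) + int (k choose 2) - (int d)^2))"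
proof -
  have s1: "(\<Sum>k<n. qvar ^ k * qbinom (2 * k) (k + d) * qpoch (- (qvar ^ (k + 1))) (n - 1 - k)) = S1 n d"
    by (simp add: S1_def W_def)
  have s2: "(\<Sum>k<n. qvar ^ k * qbinom (2 * k) (k + d) * (qpoch (- (qvar ^ (k + 1))) (n - 1 - k))^2) = S2 n d"
    by (simp add: S2_def W_def)
  have r: "(\<Sum>k\<in>{d+1..n}. qvar powi (int (n choose 2) + int (k choose 2) - (int d)^2)) = Rs n d"
    by (simp add: Rs_def)
  have n1: "1 \<le> n" using assms(1) by simp
  show ?thesis unfolding s1 s2 r
  proof (intro conjI impI)
    assume h: "int n mod 2 = int d mod 2"
    have "int (n mod 2) = int (d mod 2)" using h by (simp add: zmod_int add.commute)
    then have h': "n mod 2 = d mod 2" by (simp only: of_nat_eq_iff)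
    have "\<exists>i. n = d + 2 * i" using h' assms(2) n1 by presburger
    then obtain i where i: "n = d + 2 * i" by blast
    have "cyc_cong n (S1 n (n - 2 * i)) 0" by (rule S1_even[OF n1]) (simp add: i)
    moreover have "n - 2 * i = d" using i by simp
    ultimately show "cyc_cong n (S1 n d) 0" by simp
  next
    assume h: "int n mod 4 = (int d + 1) mod 4"
    have "int (n mod 4) = int ((d + 1) mod 4)" using h by (simp add: zmod_int add.commute)
    then have h': "n mod 4 = (d + 1) mod 4" by (simp only: of_nat_eq_iff)
    have "\<exists>j. n = d + 1 + 4 * j" using h' assms(2) n1 by presburger
    then obtain j where j: "n = d + 1 + 4 * j" by blast
    have c: "cyc_cong n (S1 n (n - 1 - 2 * (2 * j))) ((-1)^(2*j) * qvar powi (3 * int (2*j) * (int (2*j) + int (n - 1 - 2 * (2*j))) - 1))"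
      by (rule S1_odd[OF n1]) (simp add: j)
    have dd: "n - 1 - 2 * (2 * j) = d" using j by simp
    have ex: "3 * ((int n - 1)^2 - (int d)^2) div 4 - 1 = 3 * int (2*j) * (int (2*j) + int d) - 1"
    proof -
      have A: "3 * ((int n - 1)^2 - (int d)^2) = 4 * (3 * int (2*j) * (int (2*j) + int d))"
        by (simp add: j algebra_simps power2_eq_square)
      show ?thesis unfolding A by (simp only: nonzero_mult_div_cancel_left[of 4] zero_neq_numeral not_False_eq_True)
    qed
    have m1: "(-1::ratfun)^(2*j) = 1" by (rule power_minus1_even)
    show "cyc_cong n (S1 n d) (qvar powi (3 * ((int n - 1)^2 - (int d)^2) div 4 - 1))"
      using c unfolding dd ex m1 mult_1_left .
  next
    assume h: "int n mod 4 = (int d - 1) mod 4"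
    have m3: "(int d - 1) mod 4 = (int d + 3) mod 4" by (simp add: mod_eq_dvd_iff)
    have "int (n mod 4) = int ((d + 3) mod 4)" using h unfolding m3 by (simp add: zmod_int add.commute)
    then have h': "n mod 4 = (d + 3) mod 4" by (simp only: of_nat_eq_iff)
    have "\<exists>j. n = d + 3 + 4 * j" using h' assms(2) n1 by presburger
    then obtain j where j: "n = d + 3 + 4 * j" by blast
    have c: "cyc_cong n (S1 n (n - 1 - 2 * (2 * j + 1))) ((-1)^(2*j+1) * qvar powi (3 * int (2*j+1) * (int (2*j+1) + int (n - 1 - 2 * (2*j+1))) - 1))"
      by (rule S1_odd[OF n1]) (simp add: j)
    have dd: "n - 1 - 2 * (2 * j + 1) = d" using j by simp
    have ex: "3 * ((int n - 1)^2 - (int d)^2) div 4 - 1 = 3 * int (2*j+1) * (int (2*j+1) + int d) - 1"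
    proof -
      have A: "3 * ((int n - 1)^2 - (int d)^2) = 4 * (3 * int (2*j+1) * (int (2*j+1) + int d))"
        by (simp add: j algebra_simps power2_eq_square)
      show ?thesis unfolding A by (simp only: nonzero_mult_div_cancel_left[of 4] zero_neq_numeral not_False_eq_True)
    qed
    have m1: "(-1::ratfun)^(2*j+1) = -1" using power_minus1_odd[of j] by simp
    show "cyc_cong n (S1 n d) (- (qvar powi (3 * ((int n - 1)^2 - (int d)^2) div 4 - 1)))"
      using c unfolding dd ex m1 mult_minus1 .
  next
    have "n - d - 1 + 1 \<le> n" using assms(2) n1 by simp
    from S2_chain[OF n1 this] have "cyc_cong n (S2 n (n - (n - d - 1 + 1))) (Rs n (n - (n - d - 1 + 1)))" by simp
    moreover have "n - (n - d - 1 + 1) = d" using assms(2) n1 by simp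
    ultimately show "cyc_cong n (S2 n d) (Rs n d)" by simp
  qed
qed

end
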